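(* Let $a,b,c,f\in C^\infty(\mathbb R)$, $K_1=uu_x$, $K_3=a(u)u_{xxx}+b(u)u_{xx}u_x+c(u)u_x^3$ and $Q_1=f(u)u_x$. Then $Q_3=g_1u_{xxx}+g_2u_{xx}u_x+g_3u_x^3\in\mathcal D_3$ with $$g_1=af',\qquad g_2=bf'+2af'',\qquad g_3=cf'+\tfrac12 bf''+\tfrac12 af'''$$ satisfies $K_1'[Q_3]-Q_3'[K_1]=Q_1'[K_3]-K_3'[Q_1]$, and it is the unique element of $\mathcal D_3$ doing so. Equivalently, $u_\tau=Q_1+\hbar^2Q_3$ commutes with $u_t=K_1+\hbar^2K_3$ up to terms of order $\hbar^4$.
   Context: $u_k=\partial_x^ku$; $\mathcal D=C^\infty(\mathbb R)[u_1,u_2,\dots]$ (coefficients smooth functions of $u$), graded by $\deg u_k=k$, coefficients of degree $0$; $\mathcal D_k$ is the span of degree-$k$ monomials. Total derivative $D=\sum_{r\ge0}u_{r+1}\partial/\partial u_r$ ($u_0=u$); Fréchet derivative $P'[V]=\sum_{r\ge0}\frac{\partial P}{\partial u_r}D^rV$. Primes on $a,b,c,f$ denote derivatives with respect to $u$. *)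

theory Defs
  imports "HOL-Analysis.Analysis"
begin

text \<open>Jet coordinates: a point of jet space is j :: nat => real with j k = u_k (u_0 = u).
  A differential function is a map (nat => real) => real.\<close>

type_synonym jet = "nat \<Rightarrow> real"
type_synonym difffun = "jet \<Rightarrow> real"

definition smooth :: "(real \<Rightarrow> real) \<Rightarrow> bool" where
  "smooth f \<longleftrightarrow> (\<forall>n x. ((deriv ^^ n) f) differentiable (at x))"

definition pder :: "nat \<Rightarrow> difffun \<Rightarrow> difffun" where
  "pder r P = (\<lambda>j. deriv (\<lambda>t. P (j(r := t))) (j r))"

definition totD :: "difffun \<Rightarrow> difffun" where
  "totD P = (\<lambda>j. \<Sum>r. j (Suc r) * pder r P j)"

definition frechet :: "difffun \<Rightarrow> difffun \<Rightarrow> difffun" where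
  "frechet P V = (\<lambda>j. \<Sum>r. pder r P j * (totD ^^ r) V j)"

definition D3 :: "difffun set" where
  "D3 = {P. \<exists>g1 g2 g3. smooth g1 \<and> smooth g2 \<and> smooth g3 \<and>
          P = (\<lambda>j. g1 (j 0) * j 3 + g2 (j 0) * j 2 * j 1 + g3 (j 0) * (j 1)^3)}"

end

theory Submission
  imports Defs
begin

section \<open>Smoothness closure\<close>

lemma rd_add: "(f::real\<Rightarrow>real) differentiable at x \<Longrightarrow> g differentiable at x \<Longrightarrow>
   deriv (\<lambda>x. f x + g x) x = deriv f x + deriv g x"
proof -
  assume "f differentiable at x" "g differentiable at x"
  then have "DERIV f x :> deriv f x" "DERIV g x :> deriv g x"
    by (simp_all add: DERIV_deriv_iff_real_differentiable)
  then show ?thesis by (intro DERIV_imp_deriv derivative_intros)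
qed

lemma rd_mult: "(f::real\<Rightarrow>real) differentiable at x \<Longrightarrow> g differentiable at x \<Longrightarrow>
   deriv (\<lambda>x. f x * g x) x = deriv f x * g x + f x * deriv g x"
proof -
  assume "f differentiable at x" "g differentiable at x"
  then have "DERIV f x :> deriv f x" "DERIV g x :> deriv g x"
    by (simp_all add: DERIV_deriv_iff_real_differentiable)
  then show ?thesis by (intro DERIV_imp_deriv) (auto intro!: derivative_eq_intros)
qed

lemma funpow_deriv_Suc: "(deriv ^^ Suc n) f = (deriv ^^ n) (deriv f)"
  by (simp add: funpow_Suc_right del: funpow.simps)

lemma deriv_n_add:
  fixes f g :: "real \<Rightarrow> real"
  assumes "\<forall>k<n. \<forall>x. (deriv ^^ k) f differentiable at x"
      and "\<forall>k<n. \<forall>x. (deriv ^^ k) g differentiable at x"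
  shows "(deriv ^^ n) (\<lambda>x. f x + g x) = (\<lambda>x. (deriv ^^ n) f x + (deriv ^^ n) g x)"
  using assms
proof (induction n arbitrary: f g)
  case 0
  then show ?case by simp
next
  case (Suc n)
  have f0: "\<And>x. f differentiable at x" and g0: "\<And>x. g differentiable at x"
    using Suc.prems by (metis funpow_0 zero_less_Suc)+
  have d: "deriv (\<lambda>x. f x + g x) = (\<lambda>x. deriv f x + deriv g x)"
    by (intro ext rd_add f0 g0)
  have "(deriv ^^ Suc n) (\<lambda>x. f x + g x) = (deriv ^^ n) (\<lambda>x. deriv f x + deriv g x)"
    by (simp only: funpow_deriv_Suc d)
  also have "\<dots> = (\<lambda>x. (deriv ^^ n) (deriv f) x + (deriv ^^ n) (deriv g) x)"
  proof (rule Suc.IH)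
    show "\<forall>k<n. \<forall>x. (deriv ^^ k) (deriv f) differentiable at x"
      using Suc.prems(1) by (metis Suc_mono funpow_deriv_Suc)
    show "\<forall>k<n. \<forall>x. (deriv ^^ k) (deriv g) differentiable at x"
      using Suc.prems(2) by (metis Suc_mono funpow_deriv_Suc)
  qed
  finally show ?case by (simp only: funpow_deriv_Suc)
qed

lemma smooth_diff: "smooth f \<Longrightarrow> f differentiable at x"
  unfolding smooth_def by (metis funpow_0)

lemma smooth_deriv: "smooth f \<Longrightarrow> smooth (deriv f)"
  unfolding smooth_def by (metis funpow_deriv_Suc)

lemma smooth_funpow: "smooth f \<Longrightarrow> smooth ((deriv ^^ n) f)"
  by (induction n) (auto simp: smooth_deriv)

lemma smooth_add: "smooth f \<Longrightarrow> smooth g \<Longrightarrow> smooth (\<lambda>x. f x + g x)"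
proof -
  assume a: "smooth f" "smooth g"
  show ?thesis unfolding smooth_def
  proof (intro allI)
    fix n x
    show "(deriv ^^ n) (\<lambda>x. f x + g x) differentiable at x"
      using a unfolding smooth_def by (subst deriv_n_add) (auto intro!: derivative_intros)
  qed
qed

lemma smooth_mult_aux:
  "\<forall>f g. smooth f \<longrightarrow> smooth g \<longrightarrow> (\<forall>k\<le>n. \<forall>x. (deriv ^^ k) (\<lambda>x. f x * g x) differentiable at x)"
proof (induction n)
  case 0
  show ?case
  proof (intro allI impI)
    fix f g :: "real \<Rightarrow> real" and k x
    assume "smooth f" "smooth g" "k \<le> (0::nat)"
    then show "(deriv ^^ k) (\<lambda>x. f x * g x) differentiable at x"
      using differentiable_mult[OF smooth_diff smooth_diff] by simp
  qed
next
  case (Suc n)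
  show ?case
  proof (intro allI impI)
    fix f g k x assume sf: "smooth f" and sg: "smooth g" and k: "k \<le> Suc n"
    show "(deriv ^^ k) (\<lambda>x. f x * g x) differentiable at x"
    proof (cases "k \<le> n")
      case True then show ?thesis using Suc.IH sf sg by blast
    next
      case False
      then have kk: "k = Suc n" using k by simp
      have d: "deriv (\<lambda>x. f x * g x) = (\<lambda>x. deriv f x * g x + f x * deriv g x)"
        by (intro ext rd_mult smooth_diff sf sg)
      have A: "\<forall>k\<le>n. \<forall>x. (deriv ^^ k) (\<lambda>x. deriv f x * g x) differentiable at x"
        using Suc.IH sf sg smooth_deriv by blast
      have B: "\<forall>k\<le>n. \<forall>x. (deriv ^^ k) (\<lambda>x. f x * deriv g x) differentiable at x"
        using Suc.IH sf sg smooth_deriv by blast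
      have "(deriv ^^ k) (\<lambda>x. f x * g x) = (deriv ^^ n) (\<lambda>x. deriv f x * g x + f x * deriv g x)"
        by (simp only: kk funpow_deriv_Suc d)
      also have "\<dots> = (\<lambda>x. (deriv ^^ n) (\<lambda>x. deriv f x * g x) x + (deriv ^^ n) (\<lambda>x. f x * deriv g x) x)"
        by (rule deriv_n_add) (use A B in auto)
      finally show ?thesis using A B by (auto intro!: derivative_intros)
    qed
  qed
qed

lemma smooth_mult: "smooth f \<Longrightarrow> smooth g \<Longrightarrow> smooth (\<lambda>x. f x * g x)"
  using smooth_mult_aux unfolding smooth_def by (meson order_refl)

lemma smooth_const: "smooth (\<lambda>x. c)"
proof -
  have "(deriv ^^ n) (\<lambda>x. c) = (\<lambda>x. if n = 0 then c else 0)" for n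
    by (induction n) auto
  then show ?thesis unfolding smooth_def by simp
qed

section \<open>Jet calculus\<close>

lemma pder_eq:
  assumes "\<And>j. ((\<lambda>t. P (j(r:=t))) has_real_derivative D j) (at (j r))"
  shows "pder r P = D"
  unfolding pder_def using DERIV_imp_deriv assms by (auto intro!: ext)

lemma pder_const:
  assumes "\<And>j t. P (j(r:=t)) = P j"
  shows "pder r P = (\<lambda>j. 0)"
  by (rule pder_eq) (simp add: assms)

lemma totD_fin:
  assumes "\<And>r. r \<ge> N \<Longrightarrow> pder r P = (\<lambda>j. 0)"
  shows "totD P = (\<lambda>j. \<Sum>r<N. j (Suc r) * pder r P j)"
  unfolding totD_def by (rule ext, rule suminf_finite) (auto simp: assms)

lemma frechet_fin:
  assumes "\<And>r. r \<ge> N \<Longrightarrow> pder r P = (\<lambda>j. 0)"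
  shows "frechet P V = (\<lambda>j. \<Sum>r<N. pder r P j * (totD ^^ r) V j)"
  unfolding frechet_def by (rule ext, rule suminf_finite) (auto simp: assms)

lemma sum2: "(\<Sum>r<(2::nat). F r) = F 0 + (F 1::real)" by (simp add: eval_nat_numeral)
lemma sum3: "(\<Sum>r<(3::nat). F r) = F 0 + F 1 + (F 2::real)" by (simp add: eval_nat_numeral)
lemma sum4: "(\<Sum>r<(4::nat). F r) = F 0 + F 1 + F 2 + (F 3::real)" by (simp add: eval_nat_numeral)
lemma pow4: "(x::real) ^ 4 = x * (x * (x * x))" by (simp add: eval_nat_numeral)
lemma fp1: "((f::'a\<Rightarrow>'a) ^^ 1) x = f x" by simp
lemma sucs: "Suc 0 = 1" "Suc 1 = 2" "Suc 2 = 3" "Suc 3 = 4" by simp_all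
lemma fp2: "((f::'a\<Rightarrow>'a) ^^ 2) x = f (f x)" by (simp add: eval_nat_numeral)
lemma fp3: "((f::'a\<Rightarrow>'a) ^^ 3) x = f (f (f x))" by (simp add: eval_nat_numeral)

definition K1c :: difffun where "K1c = (\<lambda>j. j 0 * j 1)"
definition Qg :: "(real \<Rightarrow> real) \<Rightarrow> (real \<Rightarrow> real) \<Rightarrow> (real \<Rightarrow> real) \<Rightarrow> difffun" where
  "Qg g1 g2 g3 = (\<lambda>j. g1 (j 0) * j 3 + g2 (j 0) * j 2 * j 1 + g3 (j 0) * (j 1)^3)"
definition Q1c :: "(real \<Rightarrow> real) \<Rightarrow> difffun" where "Q1c f = (\<lambda>j. f (j 0) * j 1)"

lemma K1_p0: "pder 0 K1c = (\<lambda>j. j 1)"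
  by (rule pder_eq) (auto simp: K1c_def intro!: derivative_eq_intros)
lemma K1_p1: "pder 1 K1c = (\<lambda>j. j 0)"
  by (rule pder_eq) (auto simp: K1c_def intro!: derivative_eq_intros)
lemma K1_pN: "r \<ge> 2 \<Longrightarrow> pder r K1c = (\<lambda>j. 0)"
  by (rule pder_const) (auto simp: K1c_def)

lemma K1_tD: "totD K1c = (\<lambda>j. \<Sum>r<2. j (Suc r) * pder r K1c j)"
  by (rule totD_fin) (erule K1_pN)
lemma K1_fr: "frechet K1c V = (\<lambda>j. \<Sum>r<2. pder r K1c j * (totD ^^ r) V j)"
  by (rule frechet_fin) (erule K1_pN)

lemma K1_D1: "totD K1c = (\<lambda>j. j 1 ^ 2 + j 0 * j 2)"
  unfolding K1_tD sum2 K1_p0 K1_p1 sucs by (simp add: power2_eq_square algebra_simps)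

lemma K1_D2: "totD (totD K1c) = (\<lambda>j. 3 * j 1 * j 2 + j 0 * j 3)"
proof -
  let ?P = "\<lambda>j::jet. j 1 ^ 2 + j 0 * j 2"
  have p0: "pder 0 ?P = (\<lambda>j. j 2)"
    by (rule pder_eq) (auto intro!: derivative_eq_intros)
  have p1: "pder 1 ?P = (\<lambda>j. 2 * j 1)"
    by (rule pder_eq) (auto intro!: derivative_eq_intros)
  have p2: "pder 2 ?P = (\<lambda>j. j 0)"
    by (rule pder_eq) (auto intro!: derivative_eq_intros)
  have pN: "r \<ge> 3 \<Longrightarrow> pder r ?P = (\<lambda>j. 0)" for r
    by (rule pder_const) auto
  have t: "totD ?P = (\<lambda>j. \<Sum>r<3. j (Suc r) * pder r ?P j)"
    by (rule totD_fin) (erule pN)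
  show ?thesis unfolding K1_D1 t sum3 p0 p1 p2 sucs by (simp add: algebra_simps)
qed

lemma K1_D3: "totD (totD (totD K1c)) = (\<lambda>j. 3 * j 2 ^ 2 + 4 * j 1 * j 3 + j 0 * j 4)"
proof -
  let ?P = "\<lambda>j::jet. 3 * j 1 * j 2 + j 0 * j 3"
  have p0: "pder 0 ?P = (\<lambda>j. j 3)"
    by (rule pder_eq) (auto intro!: derivative_eq_intros)
  have p1: "pder 1 ?P = (\<lambda>j. 3 * j 2)"
    by (rule pder_eq) (auto intro!: derivative_eq_intros)
  have p2: "pder 2 ?P = (\<lambda>j. 3 * j 1)"
    by (rule pder_eq) (auto intro!: derivative_eq_intros)
  have p3: "pder 3 ?P = (\<lambda>j. j 0)"
    by (rule pder_eq) (auto intro!: derivative_eq_intros)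
  have pN: "r \<ge> 4 \<Longrightarrow> pder r ?P = (\<lambda>j. 0)" for r
    by (rule pder_const) auto
  have t: "totD ?P = (\<lambda>j. \<Sum>r<4. j (Suc r) * pder r ?P j)"
    by (rule totD_fin) (erule pN)
  show ?thesis unfolding K1_D2 t sum4 p0 p1 p2 p3 sucs by (simp add: algebra_simps power2_eq_square)
qed

lemma Qg_p1: "pder 1 (Qg g1 g2 g3) = (\<lambda>j. g2 (j 0) * j 2 + 3 * g3 (j 0) * j 1 ^ 2)"
  by (rule pder_eq) (auto simp: Qg_def intro!: derivative_eq_intros)
lemma Qg_p2: "pder 2 (Qg g1 g2 g3) = (\<lambda>j. g2 (j 0) * j 1)"
  by (rule pder_eq) (auto simp: Qg_def intro!: derivative_eq_intros)
lemma Qg_p3: "pder 3 (Qg g1 g2 g3) = (\<lambda>j. g1 (j 0))"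
  by (rule pder_eq) (auto simp: Qg_def intro!: derivative_eq_intros)
lemma Qg_pN: "r \<ge> 4 \<Longrightarrow> pder r (Qg g1 g2 g3) = (\<lambda>j. 0)"
  by (rule pder_const) (auto simp: Qg_def)
lemma Qg_tD: "totD (Qg g1 g2 g3) = (\<lambda>j. \<Sum>r<4. j (Suc r) * pder r (Qg g1 g2 g3) j)"
  by (rule totD_fin) (erule Qg_pN)
lemma Qg_fr: "frechet (Qg g1 g2 g3) V = (\<lambda>j. \<Sum>r<4. pder r (Qg g1 g2 g3) j * (totD ^^ r) V j)"
  by (rule frechet_fin) (erule Qg_pN)

lemma bracket_Qg:
  "frechet K1c (Qg g1 g2 g3) j - frechet (Qg g1 g2 g3) K1c j =
    - 3 * g1 (j 0) * j 1 * j 3 - 3 * g1 (j 0) * j 2 ^ 2 - 3 * g2 (j 0) * j 1 ^ 2 * j 2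
    - 2 * g3 (j 0) * j 1 ^ 4"
  unfolding K1_fr Qg_fr Qg_tD sum2 sum4 fp2 fp3 funpow_0 fp1
  unfolding K1_D3
  unfolding K1_D2
  unfolding K1_D1
  unfolding K1_p0 K1_p1 Qg_p1 Qg_p2 Qg_p3 sucs
  apply (simp add: Qg_def K1c_def algebra_simps power2_eq_square power3_eq_cube pow4)
  done

locale fderivs =
  fixes f f1 f2 f3 :: "real \<Rightarrow> real"
  assumes d0: "\<And>x. (f has_real_derivative f1 x) (at x)"
      and d1: "\<And>x. (f1 has_real_derivative f2 x) (at x)"
      and d2: "\<And>x. (f2 has_real_derivative f3 x) (at x)"
begin

lemma Q1_p0: "pder 0 (Q1c f) = (\<lambda>j. f1 (j 0) * j 1)"
  by (rule pder_eq) (auto simp: Q1c_def intro!: derivative_eq_intros d0)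
lemma Q1_p1: "pder 1 (Q1c f) = (\<lambda>j. f (j 0))"
  by (rule pder_eq) (auto simp: Q1c_def intro!: derivative_eq_intros)
lemma Q1_pN: "r \<ge> 2 \<Longrightarrow> pder r (Q1c f) = (\<lambda>j. 0)"
  by (rule pder_const) (auto simp: Q1c_def)
lemma Q1_tD: "totD (Q1c f) = (\<lambda>j. \<Sum>r<2. j (Suc r) * pder r (Q1c f) j)"
  by (rule totD_fin) (erule Q1_pN)
lemma Q1_fr: "frechet (Q1c f) V = (\<lambda>j. \<Sum>r<2. pder r (Q1c f) j * (totD ^^ r) V j)"
  by (rule frechet_fin) (erule Q1_pN)

lemma Q1_D1: "totD (Q1c f) = (\<lambda>j. f1 (j 0) * j 1 ^ 2 + f (j 0) * j 2)"
  unfolding Q1_tD sum2 Q1_p0 Q1_p1 sucs by (simp add: power2_eq_square algebra_simps)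

lemma Q1_D2: "totD (totD (Q1c f)) = (\<lambda>j. f2 (j 0) * j 1 ^ 3 + 3 * f1 (j 0) * j 1 * j 2 + f (j 0) * j 3)"
proof -
  let ?P = "\<lambda>j::jet. f1 (j 0) * j 1 ^ 2 + f (j 0) * j 2"
  have p0: "pder 0 ?P = (\<lambda>j. f2 (j 0) * j 1 ^ 2 + f1 (j 0) * j 2)"
    by (rule pder_eq) (auto intro!: derivative_eq_intros d0 d1)
  have p1: "pder 1 ?P = (\<lambda>j. 2 * f1 (j 0) * j 1)"
    by (rule pder_eq) (auto intro!: derivative_eq_intros)
  have p2: "pder 2 ?P = (\<lambda>j. f (j 0))"
    by (rule pder_eq) (auto intro!: derivative_eq_intros)
  have pN: "r \<ge> 3 \<Longrightarrow> pder r ?P = (\<lambda>j. 0)" for r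
    by (rule pder_const) auto
  have t: "totD ?P = (\<lambda>j. \<Sum>r<3. j (Suc r) * pder r ?P j)"
    by (rule totD_fin) (erule pN)
  show ?thesis unfolding Q1_D1 t sum3 p0 p1 p2 sucs
    by (simp add: algebra_simps power2_eq_square power3_eq_cube)
qed

lemma Q1_D3: "totD (totD (totD (Q1c f))) = (\<lambda>j. f3 (j 0) * j 1 ^ 4 + 6 * f2 (j 0) * j 1 ^ 2 * j 2
   + 3 * f1 (j 0) * j 2 ^ 2 + 4 * f1 (j 0) * j 1 * j 3 + f (j 0) * j 4)"
proof -
  let ?P = "\<lambda>j::jet. f2 (j 0) * j 1 ^ 3 + 3 * f1 (j 0) * j 1 * j 2 + f (j 0) * j 3"
  have p0: "pder 0 ?P = (\<lambda>j. f3 (j 0) * j 1 ^ 3 + 3 * f2 (j 0) * j 1 * j 2 + f1 (j 0) * j 3)"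
    by (rule pder_eq) (auto intro!: derivative_eq_intros d0 d1 d2)
  have p1: "pder 1 ?P = (\<lambda>j. 3 * f2 (j 0) * j 1 ^ 2 + 3 * f1 (j 0) * j 2)"
    by (rule pder_eq) (auto intro!: derivative_eq_intros simp: power2_eq_square)
  have p2: "pder 2 ?P = (\<lambda>j. 3 * f1 (j 0) * j 1)"
    by (rule pder_eq) (auto intro!: derivative_eq_intros)
  have p3: "pder 3 ?P = (\<lambda>j. f (j 0))"
    by (rule pder_eq) (auto intro!: derivative_eq_intros)
  have pN: "r \<ge> 4 \<Longrightarrow> pder r ?P = (\<lambda>j. 0)" for r
    by (rule pder_const) auto
  have t: "totD ?P = (\<lambda>j. \<Sum>r<4. j (Suc r) * pder r ?P j)"
    by (rule totD_fin) (erule pN)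
  show ?thesis unfolding Q1_D2 t sum4 p0 p1 p2 p3 sucs
    by (simp add: algebra_simps power2_eq_square power3_eq_cube pow4)
qed

lemma bracket_rhs:
  "frechet (Q1c f) (Qg a b c) j - frechet (Qg a b c) (Q1c f) j =
    - 3 * a (j 0) * f1 (j 0) * j 1 * j 3 - 3 * a (j 0) * f1 (j 0) * j 2 ^ 2
    - (3 * b (j 0) * f1 (j 0) + 6 * a (j 0) * f2 (j 0)) * j 1 ^ 2 * j 2
    - (2 * c (j 0) * f1 (j 0) + b (j 0) * f2 (j 0) + a (j 0) * f3 (j 0)) * j 1 ^ 4"
  unfolding Q1_fr Qg_fr Qg_tD sum2 sum4 fp2 fp3 funpow_0 fp1
  unfolding Q1_D3
  unfolding Q1_D2
  unfolding Q1_D1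
  unfolding Q1_p0 Q1_p1 Qg_p1 Qg_p2 Qg_p3 sucs
  apply (simp add: Qg_def Q1c_def algebra_simps power2_eq_square power3_eq_cube pow4)
  done

end

lemma coeff_unique:
  fixes h1 h2 h3 g1 g2 g3 :: "real \<Rightarrow> real"
  assumes "\<And>j::jet. - 3 * h1 (j 0) * j 1 * j 3 - 3 * h1 (j 0) * j 2 ^ 2 - 3 * h2 (j 0) * j 1 ^ 2 * j 2
    - 2 * h3 (j 0) * j 1 ^ 4 = - 3 * g1 (j 0) * j 1 * j 3 - 3 * g1 (j 0) * j 2 ^ 2 - 3 * g2 (j 0) * j 1 ^ 2 * j 2
    - 2 * g3 (j 0) * j 1 ^ 4"
  shows "h1 = g1 \<and> h2 = g2 \<and> h3 = g3"
proof -
  define J where "J x p q = (\<lambda>k::nat. if k = 0 then x else if k = 1 then 1 else if k = 2 then p else if k = 3 then q else (0::real))" for x p q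
  have e: "- 3 * h1 x * q - 3 * h1 x * p ^ 2 - 3 * h2 x * p - 2 * h3 x
     = - 3 * g1 x * q - 3 * g1 x * p ^ 2 - 3 * g2 x * p - 2 * g3 x" for x p q
    using assms[of "J x p q"] by (simp add: J_def)
  have 3: "h3 x = g3 x" for x using e[of x 0 0] by simp
  have 1: "h1 x = g1 x" for x using e[of x 1 0] 3[of x] by simp
  have 2: "h2 x = g2 x" for x using e[of x 0 1] 3[of x] 1[of x] by simp
  show ?thesis using 1 2 3 by auto
qed

theorem mainTheorem2:
  fixes a b c f :: "real \<Rightarrow> real"
  assumes "smooth a" "smooth b" "smooth c" "smooth f"
  defines "K1 \<equiv> (\<lambda>j. j 0 * j 1)"
      and "K3 \<equiv> (\<lambda>j. a (j 0) * j 3 + b (j 0) * j 2 * j 1 + c (j 0) * (j 1)^3)"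
      and "Q1 \<equiv> (\<lambda>j. f (j 0) * j 1)"
      and "Q3 \<equiv> (\<lambda>j. a (j 0) * deriv f (j 0) * j 3
              + (b (j 0) * deriv f (j 0) + 2 * a (j 0) * (deriv ^^ 2) f (j 0)) * j 2 * j 1
              + (c (j 0) * deriv f (j 0) + 1/2 * b (j 0) * (deriv ^^ 2) f (j 0)
                 + 1/2 * a (j 0) * (deriv ^^ 3) f (j 0)) * (j 1)^3)"
  shows "Q3 \<in> D3
     \<and> (\<lambda>j. frechet K1 Q3 j - frechet Q3 K1 j) = (\<lambda>j. frechet Q1 K3 j - frechet K3 Q1 j)
     \<and> (\<forall>Q\<in>D3. (\<lambda>j. frechet K1 Q j - frechet Q K1 j) = (\<lambda>j. frechet Q1 K3 j - frechet K3 Q1 j)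
                 \<longrightarrow> Q = Q3)"
proof -
  define g1 where "g1 = (\<lambda>x. a x * deriv f x)"
  define g2 where "g2 = (\<lambda>x. b x * deriv f x + 2 * a x * (deriv ^^ 2) f x)"
  define g3 where "g3 = (\<lambda>x. c x * deriv f x + 1/2 * b x * (deriv ^^ 2) f x + 1/2 * a x * (deriv ^^ 3) f x)"
  have sg1: "smooth g1" unfolding g1_def
    by (intro smooth_add smooth_mult smooth_const smooth_funpow smooth_deriv assms)
  have sg2: "smooth g2" unfolding g2_def
    by (intro smooth_add smooth_mult smooth_const smooth_funpow smooth_deriv assms)
  have sg3: "smooth g3" unfolding g3_def
    by (intro smooth_add smooth_mult smooth_const smooth_funpow smooth_deriv assms)
  have eK1: "K1 = K1c" by (simp add: K1_def K1c_def)
  have eK3: "K3 = Qg a b c" by (simp add: K3_def Qg_def)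
  have eQ1: "Q1 = Q1c f" by (simp add: Q1_def Q1c_def)
  have eQ3: "Q3 = Qg g1 g2 g3" by (simp add: Q3_def Qg_def g1_def g2_def g3_def)
  have sf1: "smooth (deriv f)" and sf2: "smooth (deriv (deriv f))"
    using smooth_deriv assms(4) by blast+
  have df: "\<And>h x. smooth h \<Longrightarrow> (h has_real_derivative deriv h x) (at x)"
    using smooth_diff DERIV_deriv_iff_real_differentiable by blast
  interpret F: fderivs f "deriv f" "deriv (deriv f)" "deriv (deriv (deriv f))"
    by unfold_locales (intro df assms(4) sf1 sf2)+
  have rhs: "frechet Q1 K3 j - frechet K3 Q1 j =
    - 3 * g1 (j 0) * j 1 * j 3 - 3 * g1 (j 0) * j 2 ^ 2 - 3 * g2 (j 0) * j 1 ^ 2 * j 2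
    - 2 * g3 (j 0) * j 1 ^ 4" for j
    unfolding eQ1 eK3 F.bracket_rhs g1_def g2_def g3_def fp2 fp3
    by (simp add: algebra_simps)
  have P1: "Q3 \<in> D3"
    unfolding D3_def eQ3 Qg_def using sg1 sg2 sg3 by blast
  have P2: "(\<lambda>j. frechet K1 Q3 j - frechet Q3 K1 j) = (\<lambda>j. frechet Q1 K3 j - frechet K3 Q1 j)"
    by (rule ext) (simp only: eK1 eQ3 bracket_Qg rhs)
  have P3: "Q = Q3" if Q: "Q \<in> D3" and
    eq: "(\<lambda>j. frechet K1 Q j - frechet Q K1 j) = (\<lambda>j. frechet Q1 K3 j - frechet K3 Q1 j)" for Q
  proof -
    obtain h1 h2 h3 where hQ: "Q = Qg h1 h2 h3"
      using Q unfolding D3_def Qg_def by blast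
    have "frechet K1 Q j - frechet Q K1 j = frechet Q1 K3 j - frechet K3 Q1 j" for j
      using eq by meson
    then have "h1 = g1 \<and> h2 = g2 \<and> h3 = g3"
      by (intro coeff_unique) (simp only: hQ eK1 bracket_Qg rhs)
    then show ?thesis using hQ eQ3 by simp
  qed
  show ?thesis using P1 P2 P3 by blast
qed

end
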